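(* Fix $X\in\{\mathsf B,\mathsf C,\mathsf D\}$ and $n\in\mathbb Z_{>0}$, and let $w\in W^X_n$. Let $i\in\mathbb Z$, $k\in[n]$ with $i<k$ be such that $t:=t_{ik}\in W^X_\infty$ and $\ell^X(wt)=\ell^X(w)+1$. Then (a) $wt\in W^X_{n+1}$; (b) $wt(k)<w(k)$; (c) $\mathrm{Des}(wt)\subseteq\mathrm{Des}(w)\cup\{k-1\}$. If moreover $wt\notin W^X_n$, then (d) $i=-n-1$; and (e) $\ell^X(wt\cdot t_{jk})\ne\ell^X(wt)+1$ for every integer $j$ with $i<j<k$ and $t_{jk}\in W^X_\infty$.
   Context: A signed permutation is a bijection $w$ of $\mathbb Z$ with $w(-i)=-w(i)$ for all $i$ and $w(i)=i$ for all but finitely many $i$; $(wt)(m)=w(t(m))$. $W^{\mathsf B}_\infty=W^{\mathsf C}_\infty$ is the group of all signed permutations, $W^{\mathsf D}_\infty$ the subgroup with $|\{i>0:w(i)<0\}|$ even; $W^X_n$ = elements of $W^X_\infty$ fixing every $m>n$. Lengths: $\ell^{\mathsf B}(w)=\ell^{\mathsf C}(w)=(\mathrm{inv}(w)+\ell_0(w))/2$, $\ell^{\mathsf D}(w)=(\mathrm{inv}(w)-\ell_0(w))/2$, with $\mathrm{inv}(w)=|\{(p,q)\in\mathbb Z^2:p<q,w(p)>w(q)\}|$ and $\ell_0(w)=|\{p>0:w(p)<0\}|$ (these are the Coxeter lengths for generators $t_0=(-1,1),t_1,t_2,\dots$ resp. $t_{-1}=(1,-2)(2,-1),t_1,t_2,\dots$,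 $t_m=(m,m+1)(-m,-m-1)$). For integers $i\ne0$ and $j$, $t_{ij}=(i,j)(-i,-j)$ (the identity if $i=-j$), and $t_{0j}=(-j,j)$, which lies in $W^{\mathsf B}_\infty$ but not $W^{\mathsf D}_\infty$. $\mathrm{Des}(w)=\{m\in\mathbb Z_{>0}:w(m)>w(m+1)\}$. *)

theory Defs
  imports Main
begin

datatype cox_type = TB | TC | TD

definition signed_perm :: "(int \<Rightarrow> int) \<Rightarrow> bool" where
  "signed_perm w \<longleftrightarrow> bij w \<and> (\<forall>i. w (-i) = - w i) \<and> finite {i. w i \<noteq> i}"

definition ell0 :: "(int \<Rightarrow> int) \<Rightarrow> nat" where
  "ell0 w = card {p. 0 < p \<and> w p < 0}"

definition invs :: "(int \<Rightarrow> int) \<Rightarrow> nat" where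
  "invs w = card {(p, q). p < q \<and> w p > w q}"

definition Winf :: "cox_type \<Rightarrow> (int \<Rightarrow> int) set" where
  "Winf X = (if X = TD then {w. signed_perm w \<and> even (ell0 w)} else {w. signed_perm w})"

definition Wn :: "cox_type \<Rightarrow> int \<Rightarrow> (int \<Rightarrow> int) set" where
  "Wn X n = {w \<in> Winf X. \<forall>m. m > n \<longrightarrow> w m = m}"

definition len :: "cox_type \<Rightarrow> (int \<Rightarrow> int) \<Rightarrow> nat" where
  "len X w = (if X = TD then (invs w - ell0 w) div 2 else (invs w + ell0 w) div 2)"

(* t_{ij} = (i,j)(-i,-j) for i \<noteq> 0 (identity if i = -j); t_{0j} = (-j,j) *)
definition tr :: "int \<Rightarrow> int \<Rightarrow> int \<Rightarrow> int" where
  "tr i j m = (if i = 0 then (if m = j then -j else if m = -j then j else m)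
     else if i = -j then m
     else if m = i then j else if m = j then i
     else if m = -i then -j else if m = -j then -i else m)"

definition Des :: "(int \<Rightarrow> int) \<Rightarrow> int set" where
  "Des w = {m. 0 < m \<and> w m > w (m + 1)}"

end

theory Submission imports Defs begin

definition sw :: "int \<Rightarrow> int \<Rightarrow> int \<Rightarrow> int" where
  "sw p q z = (if z = p then q else if z = q then p else z)"

definition Inv :: "(int \<Rightarrow> int) \<Rightarrow> (int \<times> int) set" where
  "Inv f = {(p, q). p < q \<and> f p > f q}"

lemma invs_Inv: "invs f = card (Inv f)"
  by (simp add: invs_def Inv_def)

lemma sw_sw[simp]: "sw p q (sw p q z) = z"
  by (simp add: sw_def)

lemma sw_inj: "sw p q x = sw p q y \<longleftrightarrow> x = y"
  by (metis sw_sw)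

lemma comp_sw_sw: "(f \<circ> sw p q) \<circ> sw p q = f"
  by (rule ext) simp

lemma swap_lb:
  assumes fin: "finite (Inv (f \<circ> sw p q))" and pq: "p < q" and fpq: "f p < f q"
  shows "card (Inv (f \<circ> sw p q)) \<ge> card (Inv f) + 1 + 2 * card {m. p < m \<and> m < q \<and> f p < f m \<and> f m < f q}"
proof -
  define s where "s = sw p q"
  define g where "g = f \<circ> s"
  define C where "C = {m. p < m \<and> m < q \<and> f p < f m \<and> f m < f q}"
  define h where "h = (\<lambda>(x, y). if s x < s y then (s x, s y) else (x::int, y::int))"
  define A where "A = (\<lambda>m. (p, m)) ` C"
  define B where "B = (\<lambda>m. (m, q)) ` C"
  define E where "E = insert (p, q) (A \<union> B)"
  have sp: "s p = q" "s q = p" "\<And>z. z \<noteq> p \<Longrightarrow> z \<noteq> q \<Longrightarrow> s z = z"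
    using pq by (auto simp: s_def sw_def)
  have ss: "\<And>z. s (s z) = z" by (simp add: s_def)
  have finC: "finite C" by (rule finite_subset[of _ "{p<..<q}"]) (auto simp: C_def)
  have h1: "h ` Inv f \<subseteq> Inv g"
  proof
    fix z assume "z \<in> h ` Inv f"
    then obtain x y where xy: "(x, y) \<in> Inv f" "z = h (x, y)" by auto
    hence xy2: "x < y" "f x > f y" by (auto simp: Inv_def)
    show "z \<in> Inv g"
    proof (cases "s x < s y")
      case True
      then show ?thesis using xy xy2 by (auto simp: h_def Inv_def g_def ss)
    next
      case False
      have "f (s x) > f (s y)"
      proof (cases "x = p")
        case xp: True
        then have yq: "y \<noteq> q" using xy2 fpq by auto
        have "y \<noteq> p" using xp xy2 by auto
        then have "s y = y" using yq sp by auto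
        then show ?thesis using xp sp xy2 fpq by auto
      next
        case xnp: False
        show ?thesis
        proof (cases "x = q")
          case True
          then have "y \<noteq> p" "y \<noteq> q" using xy2 pq by auto
          then have "s y = y" using sp by auto
          then show ?thesis using True sp False xy2 pq by auto
        next
          case xnq: False
          then have sx: "s x = x" using xnp sp by auto
          show ?thesis
          proof (cases "y = p")
            case True then show ?thesis using sx sp False xy2 pq by auto
          next
            case ynp: False
            show ?thesis
            proof (cases "y = q")
              case True then show ?thesis using sx sp False xy2 pq fpq by auto
            next
              case False
              then have "s y = y" using ynp sp by auto
              then show ?thesis using sx \<open>\<not> s x < s y\<close> xy2 by auto
            qed
          qed
        qed
      qed
      then show ?thesis using xy False xy2 by (auto simp: h_def Inv_def g_def)
    qed
  qed
  have injh: "inj_on h (Inv f)"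
  proof (rule inj_onI)
    fix a b assume a: "a \<in> Inv f" and b: "b \<in> Inv f" and e: "h a = h b"
    obtain x y where [simp]: "a = (x, y)" by (cases a)
    obtain x' y' where [simp]: "b = (x', y')" by (cases b)
    have "x < y" "x' < y'" using a b by (auto simp: Inv_def)
    show "a = b"
    proof (cases "s x < s y"; cases "s x' < s y'")
      assume c: "s x < s y" "s x' < s y'"
      then have "s x = s x'" "s y = s y'" using e by (simp_all add: h_def)
      then show ?thesis by (metis ss \<open>a = (x, y)\<close> \<open>b = (x', y')\<close>)
    next
      assume c: "s x < s y" "\<not> s x' < s y'"
      then have "s x = x'" "s y = y'" using e by (simp_all add: h_def)
      then have "s x' = x" "s y' = y" using ss by auto
      then show ?thesis using c \<open>x < y\<close> by simp
    next
      assume c: "\<not> s x < s y" "s x' < s y'"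
      then have "x = s x'" "y = s y'" using e by (simp_all add: h_def)
      then have "s x = x'" "s y = y'" using ss by auto
      then show ?thesis using c \<open>x' < y'\<close> by simp
    next
      assume c: "\<not> s x < s y" "\<not> s x' < s y'"
      then show ?thesis using e by (simp add: h_def)
    qed
  qed
  have finIf: "finite (Inv f)"
    using finite_subset[OF h1] fin injh finite_imageD unfolding g_def s_def by blast
  have E1: "E \<subseteq> Inv g"
    using sp pq fpq by (auto simp: E_def A_def B_def C_def Inv_def g_def)
  have E2: "E \<inter> h ` Inv f = {}"
  proof -
    { fix x y assume xy: "(x, y) \<in> Inv f" "h (x, y) \<in> E"
      hence x: "x < y" "f x > f y" by (auto simp: Inv_def)
      have False
      proof (cases "s x < s y")
        case True
        hence "(s x, s y) \<in> E" using xy by (simp add: h_def)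
        then consider "(s x, s y) = (p, q)" | m where "m \<in> C" "(s x, s y) = (p, m)"
          | m where "m \<in> C" "(s x, s y) = (m, q)"
          unfolding E_def A_def B_def by auto
        then show False
        proof cases
          case 1
          then have "x = q" "y = p" using ss sp by (metis prod.inject)+
          then show False using x pq by simp
        next
          case (2 m)
          then have "m \<noteq> p" "m \<noteq> q" "m < q" by (auto simp: C_def)
          then have "s m = m" using sp by auto
          then have "x = q" "y = m" using 2 ss sp by (metis prod.inject)+
          then show False using x \<open>m < q\<close> by simp
        next
          case (3 m)
          then have "m \<noteq> p" "m \<noteq> q" "p < m" by (auto simp: C_def)
          then have "s m = m" using sp by auto
          then have "x = m" "y = p" using 3 ss sp by (metis prod.inject)+
          then show False using x \<open>p < m\<close> by simp
        qed
      next
        case False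
        hence "(x, y) \<in> E" using xy by (simp add: h_def)
        then show False using x fpq unfolding E_def A_def B_def C_def by auto
      qed }
    then show ?thesis by auto
  qed
  have cA: "card A = card C" unfolding A_def by (rule card_image) (auto simp: inj_on_def)
  have cB: "card B = card C" unfolding B_def by (rule card_image) (auto simp: inj_on_def)
  have AB: "A \<inter> B = {}" by (auto simp: A_def B_def C_def)
  have cE: "card E = 1 + 2 * card C"
  proof -
    have "(p, q) \<notin> A \<union> B" by (auto simp: A_def B_def C_def)
    moreover have "finite (A \<union> B)" using finC by (simp add: A_def B_def)
    ultimately have "card E = Suc (card (A \<union> B))" by (simp add: E_def)
    also have "card (A \<union> B) = card A + card B"
      using AB finC by (simp add: card_Un_disjoint A_def B_def)
    finally show ?thesis using cA cB by simp
  qed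
  have "card (h ` Inv f \<union> E) = card (Inv f) + card E"
    using card_Un_disjoint[of "h ` Inv f" E] E2 finIf finC card_image[OF injh]
    by (auto simp: E_def A_def B_def)
  moreover have "card (h ` Inv f \<union> E) \<le> card (Inv g)"
    using h1 E1 fin by (intro card_mono) (auto simp: g_def s_def)
  ultimately show ?thesis using cE by (simp add: g_def s_def C_def)
qed

lemma fin_Inv:
  assumes fs: "finite {x. f x \<noteq> x}"
  shows "finite (Inv f)"
proof -
  define S where "S = {x. f x \<noteq> x}"
  define M where "M = (\<Sum>x\<in>S. \<bar>x\<bar> + \<bar>f x\<bar>)"
  have M: "\<bar>x\<bar> \<le> M \<and> \<bar>f x\<bar> \<le> M" if "x \<in> S" for x
  proof -
    have "\<bar>x\<bar> + \<bar>f x\<bar> \<le> M"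
      unfolding M_def using fs that S_def by (intro member_le_sum) auto
    then show ?thesis by auto
  qed
  have "Inv f \<subseteq> {-M..M} \<times> {-M..M}"
  proof
    fix z assume "z \<in> Inv f"
    then obtain p q where z: "z = (p, q)" "p < q" "f p > f q" by (auto simp: Inv_def)
    have p: "p \<ge> -M"
    proof (rule ccontr)
      assume "\<not> p \<ge> -M"
      then have "p \<notin> S" using M by force
      then have fp: "f p = p" by (simp add: S_def)
      show False
      proof (cases "q \<in> S")
        case True then show ?thesis using M[OF True] fp z \<open>\<not> p \<ge> -M\<close> by auto
      next
        case False then show ?thesis using fp z by (simp add: S_def)
      qed
    qed
    have q: "q \<le> M"
    proof (rule ccontr)
      assume "\<not> q \<le> M"
      then have "q \<notin> S" using M by force
      then have fq: "f q = q" by (simp add: S_def)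
      show False
      proof (cases "p \<in> S")
        case True then show ?thesis using M[OF True] fq z \<open>\<not> q \<le> M\<close> by auto
      next
        case False then show ?thesis using fq z by (simp add: S_def)
      qed
    qed
    show "z \<in> {-M..M} \<times> {-M..M}" using p q z by auto
  qed
  then show ?thesis by (rule finite_subset) simp
qed

lemma supp_comp_sw:
  assumes "finite {x. f x \<noteq> x}"
  shows "finite {x. (f \<circ> sw p q) x \<noteq> x}"
proof -
  have "{x. (f \<circ> sw p q) x \<noteq> x} \<subseteq> {x. f x \<noteq> x} \<union> {p, q}"
    by (auto simp: sw_def)
  then show ?thesis using assms finite_subset by auto
qed

lemma sp_odd: "signed_perm w \<Longrightarrow> w (- x) = - w x"
  by (simp add: signed_perm_def)

lemma sp_zero: "signed_perm w \<Longrightarrow> w 0 = 0"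
  using sp_odd[of w 0] by simp

lemma sp_inj: "signed_perm w \<Longrightarrow> w x = w y \<longleftrightarrow> x = y"
  by (auto simp: signed_perm_def bij_def inj_def)

lemma sp_fin: "signed_perm w \<Longrightarrow> finite {x. w x \<noteq> x}"
  by (simp add: signed_perm_def)

lemma Wn_sp: "w \<in> Wn X n \<Longrightarrow> signed_perm w"
  by (auto simp: Wn_def Winf_def split: if_splits)

lemma Wn_fix: "w \<in> Wn X n \<Longrightarrow> m > n \<Longrightarrow> w m = m"
  by (simp add: Wn_def)

lemma Wn_fix_neg: "w \<in> Wn X n \<Longrightarrow> m < -n \<Longrightarrow> w m = m"
  using Wn_fix[of w X n "-m"] sp_odd[OF Wn_sp, of w X n "-m"] by simp

lemma Wn_bound:
  assumes w: "w \<in> Wn X n" and x: "\<bar>x\<bar> \<le> n"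
  shows "\<bar>w x\<bar> \<le> n"
proof (rule ccontr)
  assume a: "\<not> \<bar>w x\<bar> \<le> n"
  have sp: "signed_perm w" using Wn_sp[OF w] .
  show False
  proof (cases "w x > n")
    case True
    then have "w (w x) = w x" using Wn_fix[OF w] by simp
    then have "w x = x" using sp_inj[OF sp] by simp
    then show False using True x by simp
  next
    case False
    then have "w x < -n" using a by simp
    then have "w (w x) = w x" using Wn_fix_neg[OF w] by simp
    then have "w x = x" using sp_inj[OF sp] by simp
    then show False using \<open>w x < -n\<close> x by simp
  qed
qed

lemma ell0_le_invs:
  assumes "finite (Inv w)" "\<And>x. w (-x) = - w x"
  shows "ell0 w \<le> invs w"
proof -
  have "card {p. 0 < p \<and> w p < 0} \<le> card (Inv w)"
  proof (rule card_inj_on_le[where f = "\<lambda>p. (-p, p)"])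
    show "inj_on (\<lambda>p. (- p, p)) {p. 0 < p \<and> w p < 0}" by (auto simp: inj_on_def)
    show "(\<lambda>p. (- p, p)) ` {p. 0 < p \<and> w p < 0} \<subseteq> Inv w"
      using assms(2) by (auto simp: Inv_def)
  qed (use assms in auto)
  then show ?thesis by (simp add: ell0_def invs_Inv)
qed

lemma tr_pos: "0 < i \<Longrightarrow> i < k \<Longrightarrow> tr i k = sw i k \<circ> sw (-k) (-i)"
  by (rule ext) (auto simp: tr_def sw_def)

lemma tr_neg: "i < 0 \<Longrightarrow> i \<noteq> -k \<Longrightarrow> 0 < k \<Longrightarrow> tr i k = sw i k \<circ> sw (-k) (-i)"
  by (rule ext) (auto simp: tr_def sw_def)

lemma tr_zero: "0 < k \<Longrightarrow> tr 0 k = sw (-k) k"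
  by (rule ext) (auto simp: tr_def sw_def)

lemma tr_id: "tr (-k) k = id"
  by (rule ext) (auto simp: tr_def)

lemma card_two:
  assumes "finite A" "j \<noteq> k"
  shows "card A = card (A - {j, k}) + of_bool (j \<in> A) + of_bool (k \<in> A)"
proof -
  have e: "A = (A - {j,k}) \<union> (A \<inter> {j, k})" by auto
  have "card A = card (A - {j,k}) + card (A \<inter> {j, k})"
    by (subst e, rule card_Un_disjoint) (use assms(1) in auto)
  moreover have "card (A \<inter> {j, k}) = of_bool (j \<in> A) + of_bool (k \<in> A)"
    using assms(2) by (cases "j \<in> A"; cases "k \<in> A") (auto simp: Int_insert_right)
  ultimately show ?thesis by simp
qed

lemma ell0_delta:
  assumes ff: "finite {x. f x \<noteq> x}" and fg: "finite {x. g x \<noteq> x}" and jk: "j \<noteq> k"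
    and eq: "\<And>p. 0 < p \<Longrightarrow> p \<noteq> j \<Longrightarrow> p \<noteq> k \<Longrightarrow> g p = f p"
  shows "int (ell0 g) + of_bool (0 < j \<and> f j < 0) + of_bool (0 < k \<and> f k < 0)
       = int (ell0 f) + of_bool (0 < j \<and> g j < 0) + of_bool (0 < k \<and> g k < 0)"
proof -
  define Nf where "Nf = {p. 0 < p \<and> f p < 0}"
  define Ng where "Ng = {p. 0 < p \<and> g p < 0}"
  have "Nf \<subseteq> {x. f x \<noteq> x}" "Ng \<subseteq> {x. g x \<noteq> x}" by (auto simp: Nf_def Ng_def)
  then have fin: "finite Nf" "finite Ng" using ff fg finite_subset by auto
  have same: "Nf - {j, k} = Ng - {j, k}" using eq by (auto simp: Nf_def Ng_def)
  have "card Nf = card (Nf - {j, k}) + of_bool (j \<in> Nf) + of_bool (k \<in> Nf)"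
    using card_two[OF fin(1) jk] .
  moreover have "card Ng = card (Ng - {j, k}) + of_bool (j \<in> Ng) + of_bool (k \<in> Ng)"
    using card_two[OF fin(2) jk] .
  ultimately show ?thesis using same unfolding ell0_def Nf_def Ng_def by simp
qed

lemma div2_step: "(y::nat) div 2 = x div 2 + 1 \<Longrightarrow> x + 1 \<le> y \<and> y \<le> x + 3"
  by presburger

lemma sp_comp:
  assumes "signed_perm w" "signed_perm t"
  shows "signed_perm (w \<circ> t)"
proof -
  have "{x. w (t x) \<noteq> x} \<subseteq> {x. t x \<noteq> x} \<union> {x. w x \<noteq> x}" by auto
  then have "finite {x. (w \<circ> t) x \<noteq> x}"
    using assms finite_subset by (auto simp: signed_perm_def)
  moreover have "bij (w \<circ> t)" using assms bij_comp by (auto simp: signed_perm_def)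
  ultimately show ?thesis using assms by (auto simp: signed_perm_def)
qed

lemma Winf_sp: "t \<in> Winf X \<Longrightarrow> signed_perm t"
  by (auto simp: Winf_def split: if_splits)

lemma len_step:
  assumes "finite (Inv w)" "finite (Inv v)" "\<And>x. w (-x) = - w x" "\<And>x. v (-x) = - v x"
    and "len X v = len X w + 1"
  shows "(X \<noteq> TD \<longrightarrow> 1 \<le> (int (invs v) - int (invs w)) + (int (ell0 v) - int (ell0 w))
            \<and> (int (invs v) - int (invs w)) + (int (ell0 v) - int (ell0 w)) \<le> 3)
       \<and> (X = TD \<longrightarrow> 1 \<le> (int (invs v) - int (invs w)) - (int (ell0 v) - int (ell0 w))
            \<and> (int (invs v) - int (invs w)) - (int (ell0 v) - int (ell0 w)) \<le> 3)"
proof -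
  have le: "ell0 w \<le> invs w" "ell0 v \<le> invs v" using ell0_le_invs assms by auto
  show ?thesis
  proof (cases "X = TD")
    case True
    then have "(invs v - ell0 v) div 2 = (invs w - ell0 w) div 2 + 1"
      using assms(5) by (simp add: len_def)
    from div2_step[OF this] le True show ?thesis by auto
  next
    case False
    then have "(invs v + ell0 v) div 2 = (invs w + ell0 w) div 2 + 1"
      using assms(5) by (simp add: len_def)
    from div2_step[OF this] False show ?thesis by auto
  qed
qed

lemma key:
  assumes sp: "signed_perm w" and tW: "tr i k \<in> Winf X" and k1: "1 \<le> k" and ik: "i < k"
    and L: "len X (w \<circ> tr i k) = len X w + 1"
  shows "i \<noteq> 0 \<and> i \<noteq> -k \<and> w i < w k \<and> (\<forall>m. i < m \<and> m < k \<longrightarrow> \<not> (w i < w m \<and> w m < w k))"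
proof -
  define t where "t = tr i k"
  define v where "v = w \<circ> t"
  have spt: "signed_perm t" using Winf_sp tW t_def by simp
  have spv: "signed_perm v" using sp_comp[OF sp spt] v_def by simp
  have fw: "finite {x. w x \<noteq> x}" using sp_fin[OF sp] .
  have fv: "finite {x. v x \<noteq> x}" using sp_fin[OF spv] .
  have fIw: "finite (Inv w)" using fin_Inv[OF fw] .
  have fIv: "finite (Inv v)" using fin_Inv[OF fv] .
  have ow: "\<And>x. w (-x) = - w x" using sp_odd[OF sp] .
  have ov: "\<And>x. v (-x) = - v x" using sp_odd[OF spv] .
  have w0: "w 0 = 0" using sp_zero[OF sp] .
  have winj: "\<And>x y. w x = w y \<longleftrightarrow> x = y" using sp_inj[OF sp] .
  have L': "len X v = len X w + 1" using L by (simp add: v_def t_def)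
  note LS = len_step[OF fIw fIv ow ov L']
  define C where "C = {m. i < m \<and> m < k \<and> w i < w m \<and> w m < w k}"
  have finC: "finite C" by (rule finite_subset[of _ "{i<..<k}"]) (auto simp: C_def)
  have nk: "i \<noteq> -k"
  proof
    assume "i = -k" then have "v = w" by (simp add: v_def t_def tr_id)
    then show False using L' by simp
  qed
  have i0: "i \<noteq> 0"
  proof
    assume i0: "i = 0"
    have XD: "X \<noteq> TD"
    proof
      assume "X = TD"
      then have "even (ell0 t)" using tW by (simp add: Winf_def t_def)
      moreover have "{p. 0 < p \<and> t p < 0} = {k}" using i0 k1 by (auto simp: t_def tr_def)
      ultimately show False by (simp add: ell0_def)
    qed
    have ts: "t = sw (-k) k" using tr_zero k1 i0 t_def by simp
    have vk: "v k = - w k" "v (-k) = w k" using ow k1 by (auto simp: v_def ts sw_def)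
    have veq: "\<And>p. 0 < p \<Longrightarrow> p \<noteq> -k \<Longrightarrow> p \<noteq> k \<Longrightarrow> v p = w p"
      by (auto simp: v_def ts sw_def)
    have kk: "-k \<noteq> k" using k1 by simp
    note Dl = ell0_delta[OF fw fv kk veq]
    have wk0: "w k \<noteq> 0" using winj[of k 0] w0 k1 by auto
    show False
    proof (cases "w k > 0")
      case True
      define C0 where "C0 = {m. -k < m \<and> m < k \<and> w (-k) < w m \<and> w m < w k}"
      have "0 \<in> C0" using True w0 ow k1 by (auto simp: C0_def)
      moreover have "finite C0" by (rule finite_subset[of _ "{-k<..<k}"]) (auto simp: C0_def)
      ultimately have c1: "card C0 \<ge> 1" by (metis One_nat_def Suc_leI card_gt_0_iff empty_iff)
      have "card (Inv (w \<circ> sw (-k) k)) \<ge> card (Inv w) + 1 + 2 * card C0"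
        unfolding C0_def by (rule swap_lb) (use fIv True ow k1 in \<open>auto simp: v_def ts\<close>)
      then have "invs v \<ge> invs w + 3" using c1 by (simp add: invs_Inv v_def ts)
      moreover have "int (ell0 v) = int (ell0 w) + 1" using Dl True vk k1 by simp
      ultimately show False using LS XD by linarith
    next
      case False
      then have neg: "w k < 0" using wk0 by simp
      have "card (Inv (v \<circ> sw (-k) k)) \<ge> card (Inv v) + 1 + 2 * card {m. -k < m \<and> m < k \<and> v (-k) < v m \<and> v m < v k}"
        by (rule swap_lb) (use fIw neg vk k1 in \<open>auto simp: v_def ts comp_sw_sw\<close>)
      then have "invs w \<ge> invs v + 1" by (simp add: invs_Inv v_def ts comp_sw_sw)
      moreover have "int (ell0 v) + 1 = int (ell0 w)" using Dl neg vk k1 by simp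
      ultimately show False using LS XD by linarith
    qed
  qed
  have decomp: "t = sw i k \<circ> sw (-k) (-i)"
    using tr_pos[of i k] tr_neg[of i k] i0 nk k1 ik t_def by (cases "i > 0") auto
  define w1 where "w1 = w \<circ> sw i k"
  have vw1: "v = w1 \<circ> sw (-k) (-i)" by (simp add: v_def decomp w1_def o_assoc)
  have w1v: "w1 = v \<circ> sw (-k) (-i)" using vw1 comp_sw_sw by metis
  have w1w: "w = w1 \<circ> sw i k" by (simp add: w1_def comp_sw_sw)
  have fIw1: "finite (Inv w1)" using fin_Inv[OF supp_comp_sw[OF fw, of i k]] unfolding w1_def by (simp add: comp_def)
  have d: "i \<noteq> k" "-k \<noteq> i" "-k \<noteq> k" "-i \<noteq> i" "-i \<noteq> k" "0 \<noteq> i" "0 \<noteq> k"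
    using ik nk i0 k1 by auto
  have w1vals: "w1 i = w k" "w1 k = w i" "w1 (-k) = - w k" "w1 (-i) = - w i" "w1 0 = 0"
    using d ow w0 by (auto simp: w1_def sw_def)
  have vvals: "v (-k) = - w i" "v (-i) = - w k" "v k = w i" "v i = w k"
    using d w1vals by (auto simp: vw1 sw_def)
  define J where "J = (if i > 0 then i else -i)"
  have Jk: "J \<noteq> k" using d by (auto simp: J_def)
  have veq: "\<And>p. 0 < p \<Longrightarrow> p \<noteq> J \<Longrightarrow> p \<noteq> k \<Longrightarrow> v p = w p"
    using d k1 by (auto simp: vw1 w1_def sw_def J_def split: if_splits)
  note Dl = ell0_delta[OF fw fv Jk veq]
  define E where "E = int (ell0 v) - int (ell0 w)"
  have wi0: "w i \<noteq> 0" using winj[of i 0] w0 i0 by auto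
  have wk0: "w k \<noteq> 0" using winj[of k 0] w0 k1 by auto
  have Epos: "w i < w k \<Longrightarrow> E = 0 \<or> (E = 2 \<and> i < 0 \<and> 0 < w k \<and> 0 < w (-i))"
  proof -
    assume lt: "w i < w k"
    show ?thesis
    proof (cases "i > 0")
      case True
      then have "J = i" by (simp add: J_def)
      then show ?thesis using Dl True k1 vvals
        by (auto simp: E_def of_bool_def)
    next
      case False
      then have "J = -i" "i < 0" using i0 by (auto simp: J_def)
      then show ?thesis using Dl k1 vvals ow wi0 wk0 lt
        by (cases "w k > 0"; cases "w i > 0") (auto simp: E_def of_bool_def)
    qed
  qed
  have Eneg: "w k < w i \<Longrightarrow> E \<le> 0 \<and> E \<ge> -2"
  proof -
    assume lt: "w k < w i"
    show ?thesis
    proof (cases "i > 0")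
      case True
      then have "J = i" by (simp add: J_def)
      then show ?thesis using Dl True k1 vvals
        by (auto simp: E_def of_bool_def)
    next
      case False
      then have "J = -i" "i < 0" using i0 by (auto simp: J_def)
      then show ?thesis using Dl k1 vvals ow wi0 wk0 lt
        by (cases "w k > 0"; cases "w i > 0") (auto simp: E_def of_bool_def)
    qed
  qed
  have lt: "w i < w k"
  proof (rule ccontr)
    assume "\<not> w i < w k"
    then have gt: "w k < w i" using winj[of i k] d by (cases "w i = w k") auto
    have "card (Inv (v \<circ> sw (-k) (-i))) \<ge> card (Inv v) + 1 + 2 * card {m. -k < m \<and> m < -i \<and> v (-k) < v m \<and> v m < v (-i)}"
      by (rule swap_lb) (use fIw1 w1v gt vvals ik in auto)
    then have a1: "invs w1 \<ge> invs v + 1" by (simp add: invs_Inv w1v)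
    have "card (Inv (w1 \<circ> sw i k)) \<ge> card (Inv w1) + 1 + 2 * card {m. i < m \<and> m < k \<and> w1 i < w1 m \<and> w1 m < w1 k}"
      by (rule swap_lb) (use fIw w1w gt w1vals ik in auto)
    then have a2: "invs w \<ge> invs w1 + 1" by (simp add: invs_Inv flip: w1w)
    show False using a1 a2 Eneg[OF gt] LS unfolding E_def by (cases "X = TD") linarith+
  qed
  have noC: "C = {}"
  proof (rule ccontr)
    assume "C \<noteq> {}"
    then have c1: "card C \<ge> 1" using finC by (metis One_nat_def Suc_leI card_gt_0_iff)
    define C2 where "C2 = {m. -k < m \<and> m < -i \<and> w1 (-k) < w1 m \<and> w1 m < w1 (-i)}"
    have "card (Inv (w \<circ> sw i k)) \<ge> card (Inv w) + 1 + 2 * card C"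
      unfolding C_def by (rule swap_lb) (use fIw1 w1_def lt ik in auto)
    then have a1: "invs w1 \<ge> invs w + 3" using c1 by (simp add: invs_Inv w1_def)
    have "card (Inv (w1 \<circ> sw (-k) (-i))) \<ge> card (Inv w1) + 1 + 2 * card C2"
      unfolding C2_def by (rule swap_lb) (use fIv vw1 lt w1vals ik in auto)
    then have a2: "invs v \<ge> invs w1 + 1 + 2 * card C2" by (simp add: invs_Inv flip: vw1)
    show False
    proof (cases "E = 0")
      case True
      then show False using a1 a2 LS unfolding E_def by (cases "X = TD") linarith+
    next
      case False
      then have E2: "E = 2" "i < 0" "0 < w k" "0 < w (-i)" using Epos[OF lt] by auto
      have "0 \<in> C2" using E2 w1vals ow k1 by (auto simp: C2_def)
      moreover have "finite C2" by (rule finite_subset[of _ "{-k<..<-i}"]) (auto simp: C2_def)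
      ultimately have "card C2 \<ge> 1" by (metis One_nat_def Suc_leI card_gt_0_iff empty_iff)
      then show False using a1 a2 LS E2 unfolding E_def by (cases "X = TD") linarith+
    qed
  qed
  show ?thesis using i0 nk lt noC by (auto simp: C_def)
qed

lemma ell0_par:
  assumes sp: "signed_perm w" and spt: "signed_perm (tr i k)" and i0: "i \<noteq> 0" and nk: "i \<noteq> -k"
    and ik: "i < k" and k1: "1 \<le> k"
  shows "even (ell0 (w \<circ> tr i k)) \<longleftrightarrow> even (ell0 w)"
proof -
  define v where "v = w \<circ> tr i k"
  have spv: "signed_perm v" using sp_comp[OF sp spt] v_def by simp
  have fw: "finite {x. w x \<noteq> x}" using sp_fin[OF sp] .
  have fv: "finite {x. v x \<noteq> x}" using sp_fin[OF spv] .
  have ow: "\<And>x. w (-x) = - w x" using sp_odd[OF sp] .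
  have w0: "w 0 = 0" using sp_zero[OF sp] .
  have winj: "\<And>x y. w x = w y \<longleftrightarrow> x = y" using sp_inj[OF sp] .
  define J where "J = (if i > 0 then i else -i)"
  have Jk: "J \<noteq> k" using nk ik by (auto simp: J_def)
  have veq: "\<And>p. 0 < p \<Longrightarrow> p \<noteq> J \<Longrightarrow> p \<noteq> k \<Longrightarrow> v p = w p"
    using k1 by (auto simp: v_def tr_def J_def split: if_splits)
  note Dl = ell0_delta[OF fw fv Jk veq]
  have vk: "v k = w i" "v i = w k" "v (-i) = - w k" using i0 nk ik ow by (auto simp: v_def tr_def)
  have wi0: "w i \<noteq> 0" using winj[of i 0] w0 i0 by auto
  have wk0: "w k \<noteq> 0" using winj[of k 0] w0 k1 by auto
  show ?thesis
  proof (cases "i > 0")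
    case True
    then have "J = i" by (simp add: J_def)
    then have "ell0 v = ell0 w" using Dl True k1 vk by (auto simp: of_bool_def)
    then show ?thesis by (simp add: v_def)
  next
    case False
    then have "J = -i" "i < 0" using i0 by (auto simp: J_def)
    then have "int (ell0 v) = int (ell0 w) - 2 \<or> int (ell0 v) = int (ell0 w) \<or> int (ell0 v) = int (ell0 w) + 2"
      using Dl k1 vk ow wi0 wk0
      by (cases "w k > 0"; cases "w i > 0") (auto simp: of_bool_def)
    then show ?thesis unfolding v_def[symmetric] by presburger
  qed
qed

theorem lemma2p4:
  fixes X :: cox_type and n i k :: int and w :: "int \<Rightarrow> int"
  assumes "n > 0"
    and "w \<in> Wn X n"
    and "1 \<le> k" and "k \<le> n" and "i < k"
    and "tr i k \<in> Winf X"
    and "len X (w \<circ> tr i k) = len X w + 1"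
  shows "w \<circ> tr i k \<in> Wn X (n + 1)
    \<and> (w \<circ> tr i k) k < w k
    \<and> Des (w \<circ> tr i k) \<subseteq> Des w \<union> {k - 1}
    \<and> (w \<circ> tr i k \<notin> Wn X n \<longrightarrow>
         i = - n - 1
         \<and> (\<forall>j. i < j \<and> j < k \<and> tr j k \<in> Winf X \<longrightarrow>
               len X ((w \<circ> tr i k) \<circ> tr j k) \<noteq> len X (w \<circ> tr i k) + 1))"
proof -
  note wn = assms(2)
  have sp: "signed_perm w" using Wn_sp[OF wn] .
  have wW: "w \<in> Winf X" using wn by (simp add: Wn_def)
  have k1: "1 \<le> k" and kn: "k \<le> n" and ik: "i < k" using assms by auto
  note K = key[OF sp assms(6) assms(3) assms(5) assms(7)]
  have i0: "i \<noteq> 0" and nk: "i \<noteq> -k" and lt: "w i < w k"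
    and noC: "\<And>m. i < m \<Longrightarrow> m < k \<Longrightarrow> \<not> (w i < w m \<and> w m < w k)" using K by auto
  define t where "t = tr i k"
  define v where "v = w \<circ> t"
  have spt: "signed_perm t" using Winf_sp assms(6) t_def by simp
  have spv: "signed_perm v" using sp_comp[OF sp spt] v_def by simp
  have ow: "\<And>x. w (-x) = - w x" using sp_odd[OF sp] .
  have winj: "\<And>x y. w x = w y \<longleftrightarrow> x = y" using sp_inj[OF sp] .
  have tx: "\<And>x. x \<noteq> i \<Longrightarrow> x \<noteq> k \<Longrightarrow> x \<noteq> -i \<Longrightarrow> x \<noteq> -k \<Longrightarrow> t x = x"
    by (auto simp: t_def tr_def)
  have vk: "v k = w i" "v i = w k" "v (-i) = - w k" using i0 nk ik ow by (auto simp: v_def t_def tr_def)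
  have b: "v k < w k" using vk lt by simp
  have ib: "i \<ge> -n-1"
  proof (rule ccontr)
    assume "\<not> i \<ge> -n-1"
    then have a: "i < -n-1" by simp
    have "w (-n-1) = -n-1" using Wn_fix_neg[OF wn, of "-n-1"] by simp
    moreover have "w i = i" using Wn_fix_neg[OF wn, of i] a by simp
    moreover have "\<bar>w k\<bar> \<le> n" using Wn_bound[OF wn, of k] k1 kn by simp
    ultimately show False using noC[of "-n-1"] a k1 assms(1) by auto
  qed
  have vfix: "\<And>m. m > n + 1 \<Longrightarrow> v m = m"
  proof -
    fix m assume m: "m > n + 1"
    then have "t m = m" using tx ib ik kn k1 by auto
    then show "v m = m" using Wn_fix[OF wn, of m] m by (simp add: v_def)
  qed
  have vW: "v \<in> Winf X"
  proof (cases "X = TD")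
    case True
    have "even (ell0 v) \<longleftrightarrow> even (ell0 w)"
      using ell0_par[OF sp _ i0 nk ik k1] spt by (simp add: v_def t_def)
    then show ?thesis using wW spv True by (simp add: Winf_def)
  next
    case False
    then show ?thesis using spv by (simp add: Winf_def)
  qed
  have a: "v \<in> Wn X (n + 1)" using vW vfix by (simp add: Wn_def)
  have c: "Des v \<subseteq> Des w \<union> {k - 1}"
  proof
    fix m assume mD: "m \<in> Des v"
    show "m \<in> Des w \<union> {k - 1}"
    proof (rule ccontr)
      assume nm: "m \<notin> Des w \<union> {k - 1}"
      have m0: "0 < m" and vm: "v m > v (m + 1)" using mD by (auto simp: Des_def)
      have "\<not> w m > w (m + 1)" using nm m0 by (auto simp: Des_def)
      moreover have "w m \<noteq> w (m + 1)" using winj[of m "m+1"] by simp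
      ultimately have wm: "w m < w (m + 1)" by simp
      have mk: "m + 1 \<noteq> k" using nm by auto
      define J where "J = (if i > 0 then i else -i)"
      have vpos: "\<And>x. 0 < x \<Longrightarrow> v x = (if x = k then w i else if x = J then (if i > 0 then w k else - w k) else w x)"
        using i0 nk ik k1 ow by (auto simp: v_def t_def tr_def J_def)
      have J0: "0 < J" and Jk: "J \<noteq> k" using i0 nk ik by (auto simp: J_def)
      have wJ: "i < 0 \<Longrightarrow> w J = - w i" using ow by (simp add: J_def)
      show False
      proof (cases "m = J")
        case mJ: True
        then have mk2: "m \<noteq> k" using Jk by simp
        have vm1: "v (m + 1) = w (m + 1)" using vpos[of "m+1"] mk mJ m0 by simp
        show False
        proof (cases "i > 0")
          case True
          then have "m = i" "v m = w k" using mJ vpos[of m] m0 mk2 by (auto simp: J_def)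
          then show False using noC[of "i+1"] vm vm1 wm mk ik by auto
        next
          case False
          then have "i < 0" "v m = - w k" using i0 mJ vpos[of m] m0 mk2 by (auto simp: J_def)
          then show False using vm vm1 wm wJ mJ lt by auto
        qed
      next
        case mnJ: False
        show False
        proof (cases "m + 1 = J")
          case m1J: True
          show False
          proof (cases "m = k")
            case True
            then have "i < 0" using m1J ik by (auto simp: J_def split: if_splits)
            then have "v (m + 1) = - w k" "v m = w i" using vpos[of "m+1"] vpos[of m] m1J True m0 Jk
              by auto
            then show False using vm wm wJ \<open>i < 0\<close> m1J True by auto
          next
            case mnk: False
            have vmm: "v m = w m" using vpos[of m] mnk mnJ m0 by simp
            show False
            proof (cases "i > 0")
              case True
              then have "v (m + 1) = w k" using vpos[of "m+1"] m1J Jk m0 by (simp add: J_def)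
              then show False using vm vmm wm m1J True lt by (auto simp: J_def)
            next
              case False
              then have ineg: "i < 0" using i0 by simp
              then have "v (m + 1) = - w k" using vpos[of "m+1"] m1J Jk m0 by simp
              then have h1: "w m > - w k" using vm vmm by simp
              have h2: "w m < - w i" using wm wJ[OF ineg] m1J by simp
              have "i < - m" using m1J ineg by (simp add: J_def)
              moreover have "- m < k" using m0 k1 by simp
              ultimately show False using noC[of "-m"] h1 h2 ow[of m] by auto
            qed
          qed
        next
          case m1nJ: False
          have vm1: "v (m + 1) = w (m + 1)" using vpos[of "m+1"] mk m1nJ m0 by simp
          show False
          proof (cases "m = k")
            case True
            then have "v m = w i" using vpos[of m] m0 by simp
            then show False using vm vm1 wm lt True by simp
          next
            case False
            then have "v m = w m" using vpos[of m] m0 mnJ by simp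
            then show False using vm vm1 wm by simp
          qed
        qed
      qed
    qed
  qed
  have d: "v \<notin> Wn X n \<longrightarrow> i = - n - 1 \<and> (\<forall>j. i < j \<and> j < k \<and> tr j k \<in> Winf X \<longrightarrow>
               len X (v \<circ> tr j k) \<noteq> len X v + 1)"
  proof
    assume nW: "v \<notin> Wn X n"
    have ieq: "i = -n-1"
    proof (rule ccontr)
      assume "i \<noteq> -n-1"
      then have "i \<ge> -n" using ib by simp
      then have "\<And>m. m > n \<Longrightarrow> v m = m"
        using tx ik kn Wn_fix[OF wn] by (auto simp: v_def)
      then show False using nW vW by (simp add: Wn_def)
    qed
    show "i = - n - 1 \<and> (\<forall>j. i < j \<and> j < k \<and> tr j k \<in> Winf X \<longrightarrow>
               len X (v \<circ> tr j k) \<noteq> len X v + 1)"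
    proof (intro conjI allI impI)
      show "i = -n-1" by (rule ieq)
      fix j assume j: "i < j \<and> j < k \<and> tr j k \<in> Winf X"
      show "len X (v \<circ> tr j k) \<noteq> len X v + 1"
      proof
        assume Lj: "len X (v \<circ> tr j k) = len X v + 1"
        have "v j < v k" using key[OF spv _ k1 _ Lj] j by auto
        moreover have "v k = -n-1" using vk ieq Wn_fix_neg[OF wn, of "-n-1"] by simp
        moreover have "t j = j" using tx j ieq kn key[OF spv _ k1 _ Lj] by auto
        moreover have "\<bar>j\<bar> \<le> n" using j ieq kn by auto
        then have "\<bar>w j\<bar> \<le> n" using Wn_bound[OF wn, of j] by simp
        ultimately show False by (simp add: v_def)
      qed
    qed
  qed
  show ?thesis using a b c d unfolding v_def t_def by simp
qed

end
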